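(* For $\lambda\in\mathbb{R}$ let $\mathfrak{n}_\lambda$ be the real $7$-dimensional Lie algebra with basis $e_1,\dots,e_7$ whose nonzero brackets (up to antisymmetry) are $[e_1,e_2]=e_3$, $[e_1,e_3]=e_4$, $[e_1,e_4]=e_5$, $[e_1,e_5]=e_6$, $[e_1,e_6]=e_7$, $[e_2,e_3]=e_5$, $[e_2,e_4]=e_6$, $[e_2,e_5]=\lambda e_7$, $[e_3,e_4]=(1-\lambda)e_7$. Then $\mathfrak{n}_\lambda$ is an Einstein nilradical if and only if $\lambda\notin\{0,1\}$.
   Context: A real nilpotent Lie algebra $\mathfrak{n}$ is called an Einstein nilradical if it admits an inner product such that the left-invariant Riemannian metric it defines on the simply connected nilpotent Lie group with Lie algebra $\mathfrak{n}$ is a nilsoliton, i.e. its Ricci operator satisfies $\mathrm{Ric}=c\,\mathrm{Id}+D$ for some $c\in\mathbb{R}$ and some derivation $D$ of $\mathfrak{n}$. Brackets of basis elements not listed are zero. *)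

theory Defs
  imports "HOL-Analysis.Analysis"
begin

definition is_inner_product :: "(real^'n \<Rightarrow> real^'n \<Rightarrow> real) \<Rightarrow> bool" where
  "is_inner_product ip \<longleftrightarrow> bilinear ip \<and> (\<forall>x y. ip x y = ip y x) \<and> (\<forall>x. x \<noteq> 0 \<longrightarrow> ip x x > 0)"

definition is_orthonormal_basis ::
  "(real^'n \<Rightarrow> real^'n \<Rightarrow> real) \<Rightarrow> ('n::finite \<Rightarrow> real^'n) \<Rightarrow> bool" where
  "is_orthonormal_basis ip b \<longleftrightarrow> (\<forall>i j. ip (b i) (b j) = (if i = j then 1 else 0))"

text \<open>Ricci form of the left-invariant metric defined by the inner product ip on a
  nilpotent Lie algebra with bracket B, computed in an orthonormal basis b:
  ric(x,y) = -1/2 sum_{i,j} <[x,b_i],b_j><[y,b_i],b_j> + 1/4 sum_{i,j} <[b_i,b_j],x><[b_i,b_j],y>.\<close>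
definition ricci_form_nil ::
  "(real^'n \<Rightarrow> real^'n \<Rightarrow> real) \<Rightarrow> ('n::finite \<Rightarrow> real^'n) \<Rightarrow> (real^'n \<Rightarrow> real^'n \<Rightarrow> real^'n)
     \<Rightarrow> real^'n \<Rightarrow> real^'n \<Rightarrow> real" where
  "ricci_form_nil ip b B x y =
     - (1/2) * (\<Sum>i\<in>UNIV. \<Sum>j\<in>UNIV. ip (B x (b i)) (b j) * ip (B y (b i)) (b j))
     + (1/4) * (\<Sum>i\<in>UNIV. \<Sum>j\<in>UNIV. ip (B (b i) (b j)) x * ip (B (b i) (b j)) y)"

definition is_derivation ::
  "(real^'n \<Rightarrow> real^'n \<Rightarrow> real^'n) \<Rightarrow> (real^'n \<Rightarrow> real^'n) \<Rightarrow> bool" where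
  "is_derivation B D \<longleftrightarrow> linear D \<and> (\<forall>x y. D (B x y) = B (D x) y + B x (D y))"

text \<open>The metric given by ip is a nilsoliton: Ric = c Id + D with D a derivation
  (Ric being the operator with ip (Ric x) y = ricci form (x,y)).\<close>
definition is_nilsoliton ::
  "(real^'n::finite \<Rightarrow> real^'n \<Rightarrow> real^'n) \<Rightarrow> (real^'n \<Rightarrow> real^'n \<Rightarrow> real) \<Rightarrow> bool" where
  "is_nilsoliton B ip \<longleftrightarrow>
     (\<exists>b. is_orthonormal_basis ip b \<and>
       (\<exists>c D. is_derivation B D \<and>
          (\<forall>x y. ricci_form_nil ip b B x y = ip (c *\<^sub>R x + D x) y)))"

definition einstein_nilradical :: "(real^'n::finite \<Rightarrow> real^'n \<Rightarrow> real^'n) \<Rightarrow> bool" where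
  "einstein_nilradical B \<longleftrightarrow> (\<exists>ip. is_inner_product ip \<and> is_nilsoliton B ip)"

definition e :: "nat \<Rightarrow> real^7" where
  "e k = axis (of_nat k) 1"

definition sc :: "real \<Rightarrow> nat \<Rightarrow> nat \<Rightarrow> real^7" where
  "sc t i j =
    (if i = 1 \<and> j = 2 then e 3
     else if i = 1 \<and> j = 3 then e 4
     else if i = 1 \<and> j = 4 then e 5
     else if i = 1 \<and> j = 5 then e 6
     else if i = 1 \<and> j = 6 then e 7
     else if i = 2 \<and> j = 3 then e 5
     else if i = 2 \<and> j = 4 then e 6
     else if i = 2 \<and> j = 5 then t *\<^sub>R e 7
     else if i = 3 \<and> j = 4 then (1 - t) *\<^sub>R e 7
     else 0)"

definition bc :: "real \<Rightarrow> nat \<Rightarrow> nat \<Rightarrow> real^7" where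
  "bc t i j = sc t i j - sc t j i"

definition nbr :: "real \<Rightarrow> real^7 \<Rightarrow> real^7 \<Rightarrow> real^7" where
  "nbr t x y = (\<Sum>i\<in>{1..7}. \<Sum>j\<in>{1..7}.
       (x $ of_nat i * y $ of_nat j) *\<^sub>R bc t i j)"

end

theory Submission
  imports Defs
begin

lemma nat17: "{1..7::nat} = {1,2,3,4,5,6,7}" by auto

lemma UNIV7: "(UNIV::7 set) = of_nat ` {1..7}"
proof -
  have "card (of_nat ` {1..7::nat} :: 7 set) = 7" unfolding nat17 by simp
  moreover have "card (UNIV::7 set) = 7" by simp
  ultimately have "of_nat ` {1..7::nat} = (UNIV::7 set)"
    by (intro card_subset_eq) auto
  then show ?thesis by simp
qed

lemma inj7: "inj_on (of_nat :: nat \<Rightarrow> 7) {1..7}"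
  by (rule eq_card_imp_inj_on) (unfold nat17, simp_all)

lemma sum7: "(\<Sum>i\<in>(UNIV::7 set). f i) = (\<Sum>k\<in>{1..7}. f (of_nat k))"
  by (subst UNIV7) (rule sum.reindex[OF inj7, unfolded o_def])

lemma vec7_eq: "(x::real^7) = y \<longleftrightarrow> (\<forall>k\<in>{1..7}. x $ of_nat k = y $ of_nat k)"
proof
  assume "\<forall>k\<in>{1..7}. x $ of_nat k = y $ of_nat k"
  then show "x = y" unfolding vec_eq_iff using UNIV7 by (metis imageE UNIV_I)
qed simp

lemma e_comp: "e k $ i = (if i = of_nat k then 1 else 0)"
  by (simp add: e_def axis_def)

lemma nbr_comp: "nbr t x y $ i = (\<Sum>a\<in>{1..7}. \<Sum>b\<in>{1..7}. x $ of_nat a * y $ of_nat b * bc t a b $ i)"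
  by (simp add: nbr_def)

lemma nbr1: "nbr t x y $ 1 = 0"
  unfolding nbr_comp nat17 by (simp add: bc_def sc_def e_comp)
lemma nbr3: "nbr t x y $ 3 = x$1*y$2 - x$2*y$1"
  unfolding nbr_comp nat17 by (simp add: bc_def sc_def e_comp)
lemma nbr7: "nbr t x y $ 0 = x$1*y$6 - x$6*y$1 + t*(x$2*y$5 - x$5*y$2) + (1-t)*(x$3*y$4-x$4*y$3)"
  unfolding nbr_comp nat17 by (simp add: bc_def sc_def e_comp algebra_simps)

lemma ip_lin1: "is_inner_product ip \<Longrightarrow> linear (\<lambda>x. ip x y)"
  by (simp add: is_inner_product_def bilinear_def)
lemma ip_lin2: "is_inner_product ip \<Longrightarrow> linear (ip x)"
  by (simp add: is_inner_product_def bilinear_def)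
lemma ip_sym: "is_inner_product ip \<Longrightarrow> ip x y = ip y x"
  by (simp add: is_inner_product_def)

lemma ip_sum1: "is_inner_product ip \<Longrightarrow> ip (\<Sum>k\<in>K. f k) y = (\<Sum>k\<in>K. ip (f k) y)"
  using linear_sum[OF ip_lin1] by blast
lemma ip_sum2: "is_inner_product ip \<Longrightarrow> ip y (\<Sum>k\<in>K. f k) = (\<Sum>k\<in>K. ip y (f k))"
  using linear_sum[OF ip_lin2] by blast
lemma ip_scale1: assumes "is_inner_product ip" shows "ip (a *\<^sub>R x) y = a * ip x y"
  using linear_cmul[OF ip_lin1[OF assms]] by simp
lemma ip_scale2: assumes "is_inner_product ip" shows "ip y (a *\<^sub>R x) = a * ip y x"
  using linear_cmul[OF ip_lin2[OF assms]] by simp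
lemma ip_add1: assumes "is_inner_product ip" shows "ip (x + z) y = ip x y + ip z y"
  using linear_add[OF ip_lin1[OF assms]] by simp
lemma ip_add2: assumes "is_inner_product ip" shows "ip y (x + z) = ip y x + ip y z"
  using linear_add[OF ip_lin2[OF assms]] by simp
lemma ip_diff1: assumes "is_inner_product ip" shows "ip (x - z) y = ip x y - ip z y"
  using linear_diff[OF ip_lin1[OF assms]] by simp
lemma ip_diff2: assumes "is_inner_product ip" shows "ip y (x - z) = ip y x - ip y z"
  using linear_diff[OF ip_lin2[OF assms]] by simp
lemma ip_zero1: assumes "is_inner_product ip" shows "ip 0 y = 0"
  using linear_0[OF ip_lin1[OF assms]] by simp
lemma ip_zero2: assumes "is_inner_product ip" shows "ip y 0 = 0"
  using linear_0[OF ip_lin2[OF assms]] by simp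

definition orthonormal_on :: "(real^'n \<Rightarrow> real^'n \<Rightarrow> real) \<Rightarrow> 'k set \<Rightarrow> ('k \<Rightarrow> real^'n) \<Rightarrow> bool" where
  "orthonormal_on ip K g \<longleftrightarrow> (\<forall>k\<in>K. \<forall>l\<in>K. ip (g k) (g l) = (if k = l then 1 else 0))"

lemma onb_expand:
  fixes ip :: "real^'n::finite \<Rightarrow> real^'n \<Rightarrow> real" and g :: "'k \<Rightarrow> real^'n"
  assumes ip: "is_inner_product ip" and fin: "finite K" and card: "card K = CARD('n)"
    and on: "orthonormal_on ip K g"
  shows "v = (\<Sum>k\<in>K. ip v (g k) *\<^sub>R g k)"
proof -
  have inj: "inj_on g K"
  proof (rule inj_onI)
    fix k l assume "k \<in> K" "l \<in> K" "g k = g l"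
    then have "ip (g k) (g l) = 1" using on by (simp add: orthonormal_on_def)
    then show "k = l" using on \<open>k \<in> K\<close> \<open>l \<in> K\<close> by (auto simp: orthonormal_on_def split: if_splits)
  qed
  have ortho: "\<And>x. x \<in> g ` K \<Longrightarrow> ip x (g l) = (if x = g l then 1 else 0)" if "l \<in> K" for l
    using on that inj by (auto simp: orthonormal_on_def inj_on_eq_iff)
  have indep: "independent (g ` K)"
  proof (rule independent_if_scalars_zero)
    show "finite (g ` K)" using fin by simp
    fix f x assume s: "(\<Sum>x\<in>g ` K. f x *\<^sub>R x) = 0" and x: "x \<in> g ` K"
    then obtain l where l: "l \<in> K" "x = g l" by auto
    have "0 = ip (\<Sum>x\<in>g ` K. f x *\<^sub>R x) (g l)" using s ip_zero1[OF ip] by simp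
    also have "\<dots> = (\<Sum>y\<in>g ` K. f y * ip y (g l))" by (simp add: ip_sum1[OF ip] ip_scale1[OF ip])
    also have "\<dots> = (\<Sum>y\<in>g ` K. if y = g l then f y else 0)"
      by (rule sum.cong) (auto simp: ortho[OF l(1)])
    also have "\<dots> = f x" using l fin by simp
    finally show "f x = 0" by simp
  qed
  have "card (g ` K) = dim (UNIV :: (real^'n) set)"
    using card inj by (simp add: card_image)
  then have "UNIV \<subseteq> span (g ` K)" using card_eq_dim[of "g ` K" UNIV] indep fin by auto
  then have "v \<in> span (g ` K)" by auto
  then obtain u where u: "(\<Sum>x\<in>g ` K. u x *\<^sub>R x) = v" using fin by (auto simp: span_finite)
  then have v: "v = (\<Sum>k\<in>K. u (g k) *\<^sub>R g k)" by (simp add: sum.reindex[OF inj])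
  have "ip v (g l) = u (g l)" if "l \<in> K" for l
  proof -
    have "ip v (g l) = (\<Sum>k\<in>K. u (g k) * ip (g k) (g l))"
      by (subst v) (simp add: ip_sum1[OF ip] ip_scale1[OF ip])
    also have "\<dots> = (\<Sum>k\<in>K. if k = l then u (g k) else 0)"
      by (rule sum.cong) (use on that in \<open>auto simp: orthonormal_on_def\<close>)
    also have "\<dots> = u (g l)" using that fin by simp
    finally show ?thesis .
  qed
  then show ?thesis by (subst v) (rule sum.cong, auto)
qed

lemma parseval:
  fixes ip :: "real^'n::finite \<Rightarrow> real^'n \<Rightarrow> real" and g :: "'k \<Rightarrow> real^'n"
  assumes ip: "is_inner_product ip" and fin: "finite K" and card: "card K = CARD('n)"
    and on: "orthonormal_on ip K g"
  shows "ip u v = (\<Sum>k\<in>K. ip u (g k) * ip v (g k))"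
proof -
  have "ip u v = ip (\<Sum>k\<in>K. ip u (g k) *\<^sub>R g k) v"
    by (subst onb_expand[OF ip fin card on, of u]) simp
  also have "\<dots> = (\<Sum>k\<in>K. ip u (g k) * ip v (g k))"
    by (simp add: ip_sum1[OF ip] ip_scale1[OF ip] ip_sym[OF ip, of "g _" v])
  finally show ?thesis .
qed

lemma trace_inv:
  fixes ip :: "real^'n::finite \<Rightarrow> real^'n \<Rightarrow> real" and g :: "'k \<Rightarrow> real^'n"
    and b :: "'j \<Rightarrow> real^'n" and \<beta> :: "real^'n \<Rightarrow> real^'n \<Rightarrow> real"
  assumes ip: "is_inner_product ip" and fin: "finite K" and card: "card K = CARD('n)"
    and on: "orthonormal_on ip K g"
    and finJ: "finite J" and cardJ: "card J = CARD('n)" and onJ: "orthonormal_on ip J b"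
    and bl: "bilinear \<beta>"
  shows "(\<Sum>j\<in>J. \<beta> (b j) (b j)) = (\<Sum>k\<in>K. \<beta> (g k) (g k))"
proof -
  have "(\<Sum>j\<in>J. \<beta> (b j) (b j)) = (\<Sum>j\<in>J. \<Sum>k\<in>K. \<Sum>l\<in>K. ip (b j) (g k) * ip (b j) (g l) * \<beta> (g k) (g l))"
  proof (rule sum.cong[OF refl])
    fix j
    have "\<beta> (b j) (b j) = \<beta> (\<Sum>k\<in>K. ip (b j) (g k) *\<^sub>R g k) (\<Sum>l\<in>K. ip (b j) (g l) *\<^sub>R g l)"
      by (subst (1 2) onb_expand[OF ip fin card on, of "b j"]) simp
    also have "\<dots> = (\<Sum>k\<in>K. \<Sum>l\<in>K. ip (b j) (g k) * ip (b j) (g l) * \<beta> (g k) (g l))"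
    proof -
      have L1: "linear (\<lambda>x. \<beta> x w)" for w using bl unfolding bilinear_def by blast
      have L2: "linear (\<beta> w)" for w using bl unfolding bilinear_def by blast
      show ?thesis
        apply (simp add: linear_sum[OF L1] linear_cmul[OF L1] linear_sum[OF L2] linear_cmul[OF L2]
            sum_distrib_left mult.assoc)
        apply (subst sum.swap)
        apply (rule sum.cong[OF refl], rule sum.cong[OF refl])
        apply (rule mult.left_commute)
        done
    qed
    finally show "\<beta> (b j) (b j) = \<dots>" .
  qed
  also have "\<dots> = (\<Sum>k\<in>K. \<Sum>l\<in>K. (\<Sum>j\<in>J. ip (g k) (b j) * ip (g l) (b j)) * \<beta> (g k) (g l))"
  proof -
    let ?F = "\<lambda>j k l. ip (b j) (g k) * ip (b j) (g l) * \<beta> (g k) (g l)"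
    have "(\<Sum>j\<in>J. \<Sum>k\<in>K. \<Sum>l\<in>K. ?F j k l) = (\<Sum>k\<in>K. \<Sum>j\<in>J. \<Sum>l\<in>K. ?F j k l)"
      by (rule sum.swap)
    also have "\<dots> = (\<Sum>k\<in>K. \<Sum>l\<in>K. \<Sum>j\<in>J. ?F j k l)"
      by (rule sum.cong[OF refl], rule sum.swap)
    also have "\<dots> = (\<Sum>k\<in>K. \<Sum>l\<in>K. (\<Sum>j\<in>J. ip (g k) (b j) * ip (g l) (b j)) * \<beta> (g k) (g l))"
      by (simp add: sum_distrib_right ip_sym[OF ip, of "g _" "b _"])
    finally show ?thesis .
  qed
  also have "\<dots> = (\<Sum>k\<in>K. \<Sum>l\<in>K. ip (g k) (g l) * \<beta> (g k) (g l))"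
    by (simp only: parseval[OF ip finJ cardJ onJ, symmetric])
  also have "\<dots> = (\<Sum>k\<in>K. \<Sum>l\<in>K. if l = k then \<beta> (g k) (g k) else 0)"
    by (rule sum.cong[OF refl], rule sum.cong[OF refl]) (use on in \<open>auto simp: orthonormal_on_def\<close>)
  also have "\<dots> = (\<Sum>k\<in>K. \<beta> (g k) (g k))" using fin by simp
  finally show ?thesis .
qed


lemma bilinear_prod: assumes f: "linear f" and h: "linear h" shows "bilinear (\<lambda>u v. (f u::real) * h v)"
  unfolding bilinear_def linear_iff
  by (simp add: linear_cmul[OF f] linear_add[OF f] linear_cmul[OF h] linear_add[OF h] algebra_simps)

lemma ricci_onb:
  fixes ip :: "real^'n::finite \<Rightarrow> real^'n \<Rightarrow> real" and g :: "'k \<Rightarrow> real^'n"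
  assumes ip: "is_inner_product ip" and fin: "finite K" and card: "card K = CARD('n)"
    and on: "orthonormal_on ip K g" and b: "is_orthonormal_basis ip b" and B: "bilinear B"
  shows "ricci_form_nil ip b B x y =
     - (1/2) * (\<Sum>k\<in>K. \<Sum>l\<in>K. ip (B x (g k)) (g l) * ip (B y (g k)) (g l))
     + (1/4) * (\<Sum>k\<in>K. \<Sum>l\<in>K. ip (B (g k) (g l)) x * ip (B (g k) (g l)) y)"
proof -
  have onJ: "orthonormal_on ip UNIV b" using b by (simp add: is_orthonormal_basis_def orthonormal_on_def)
  have cJ: "card (UNIV::'n set) = CARD('n)" by simp
  have fU: "finite (UNIV::'n set)" by simp
  have BL1: "linear (\<lambda>u. B u w)" for w using B by (simp add: bilinear_def)
  have BL2: "linear (B w)" for w using B by (simp add: bilinear_def)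
  have IL1: "linear (\<lambda>u. ip u w)" for w using ip_lin1[OF ip] .
  have IL2: "linear (ip w)" for w using ip_lin2[OF ip] .
  have "(\<Sum>i\<in>UNIV. \<Sum>j\<in>UNIV. ip (B x (b i)) (b j) * ip (B y (b i)) (b j))
      = (\<Sum>i\<in>UNIV. ip (B x (b i)) (B y (b i)))"
    by (simp only: parseval[OF ip fU cJ onJ, symmetric])
  also have "\<dots> = (\<Sum>k\<in>K. ip (B x (g k)) (B y (g k)))"
  proof (rule trace_inv[OF ip fin card on fU cJ onJ, where \<beta>="\<lambda>u v. ip (B x u) (B y v)"])
    show "bilinear (\<lambda>u v. ip (B x u) (B y v))"
      unfolding bilinear_def
    proof safe
      fix u show "linear (\<lambda>v. ip (B x u) (B y v))" using linear_compose[OF BL2 IL2] by (simp add: o_def)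
    next
      fix v show "linear (\<lambda>u. ip (B x u) (B y v))" using linear_compose[OF BL2 IL1] by (simp add: o_def)
    qed
  qed
  also have "\<dots> = (\<Sum>k\<in>K. \<Sum>l\<in>K. ip (B x (g k)) (g l) * ip (B y (g k)) (g l))"
    by (simp only: parseval[OF ip fin card on, symmetric])
  finally have T1: "(\<Sum>i\<in>UNIV. \<Sum>j\<in>UNIV. ip (B x (b i)) (b j) * ip (B y (b i)) (b j))
      = (\<Sum>k\<in>K. \<Sum>l\<in>K. ip (B x (g k)) (g l) * ip (B y (g k)) (g l))" .
  have lin_in1: "linear (\<lambda>u. ip (B u w) z)" for w z using linear_compose[OF BL1 IL1] by (simp add: o_def)
  have lin_in2: "linear (\<lambda>u. ip (B w u) z)" for w z using linear_compose[OF BL2 IL1] by (simp add: o_def)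
  have "(\<Sum>i\<in>UNIV. \<Sum>j\<in>UNIV. ip (B (b i) (b j)) x * ip (B (b i) (b j)) y)
      = (\<Sum>i\<in>UNIV. \<Sum>l\<in>K. ip (B (b i) (g l)) x * ip (B (b i) (g l)) y)"
    by (rule sum.cong[OF refl], rule trace_inv[OF ip fin card on fU cJ onJ bilinear_prod[OF lin_in2 lin_in2]])
  also have "\<dots> = (\<Sum>l\<in>K. \<Sum>i\<in>UNIV. ip (B (b i) (g l)) x * ip (B (b i) (g l)) y)"
    by (rule sum.swap)
  also have "\<dots> = (\<Sum>l\<in>K. \<Sum>k\<in>K. ip (B (g k) (g l)) x * ip (B (g k) (g l)) y)"
    by (rule sum.cong[OF refl], rule trace_inv[OF ip fin card on fU cJ onJ bilinear_prod[OF lin_in1 lin_in1]])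
  also have "\<dots> = (\<Sum>k\<in>K. \<Sum>l\<in>K. ip (B (g k) (g l)) x * ip (B (g k) (g l)) y)"
    by (rule sum.swap)
  finally have T2: "(\<Sum>i\<in>UNIV. \<Sum>j\<in>UNIV. ip (B (b i) (b j)) x * ip (B (b i) (b j)) y)
      = (\<Sum>k\<in>K. \<Sum>l\<in>K. ip (B (g k) (g l)) x * ip (B (g k) (g l)) y)" .
  show ?thesis by (simp only: ricci_form_nil_def T1 T2)
qed


lemma nbr2: "nbr t x y $ 2 = 0"
  unfolding nbr_comp nat17 by (simp add: bc_def sc_def e_comp)
lemma nbr4: "nbr t x y $ 4 = x$1*y$3 - x$3*y$1"
  unfolding nbr_comp nat17 by (simp add: bc_def sc_def e_comp)
lemma nbr5: "nbr t x y $ 5 = x$1*y$4 - x$4*y$1 + x$2*y$3 - x$3*y$2"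
  unfolding nbr_comp nat17 by (simp add: bc_def sc_def e_comp)
lemma nbr6: "nbr t x y $ 6 = x$1*y$5 - x$5*y$1 + x$2*y$4 - x$4*y$2"
  unfolding nbr_comp nat17 by (simp add: bc_def sc_def e_comp)

lemmas nbrc = nbr1 nbr2 nbr3 nbr4 nbr5 nbr6 nbr7

lemma seven: "(7::7) = 0" by simp

lemma vec7_eq': "(x::real^7) = y \<longleftrightarrow> x$1 = y$1 \<and> x$2 = y$2 \<and> x$3 = y$3 \<and> x$4 = y$4 \<and> x$5 = y$5 \<and> x$6 = y$6 \<and> x$0 = y$0"
  unfolding vec7_eq nat17 by (simp add: seven)

lemma bilinear_nbr: "bilinear (nbr t)"
  unfolding bilinear_def linear_iff
  by (simp add: vec7_eq' nbrc algebra_simps)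


definition ipP :: "(nat \<Rightarrow> real) \<Rightarrow> real^7 \<Rightarrow> real^7 \<Rightarrow> real" where
  "ipP p x y = (\<Sum>m\<in>{1..7}. p m * x $ of_nat m * y $ of_nat m)"

lemma ipP_exp: "ipP p x y = p 1 * x$1*y$1 + p 2 * x$2*y$2 + p 3 * x$3*y$3 + p 4 * x$4*y$4
   + p 5 * x$5*y$5 + p 6 * x$6*y$6 + p 7 * x$0*y$0"
  unfolding ipP_def nat17 by (simp add: seven)

definition DD :: "real \<Rightarrow> real^7 \<Rightarrow> real^7" where
  "DD a x = (\<Sum>m\<in>{1..7}. (a * real m * x $ of_nat m) *\<^sub>R e m)"

lemma DD_comp: "DD a x $ 1 = a * x$1" "DD a x $ 2 = 2*a * x$2" "DD a x $ 3 = 3*a * x$3"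
   "DD a x $ 4 = 4*a * x$4" "DD a x $ 5 = 5*a * x$5" "DD a x $ 6 = 6*a * x$6" "DD a x $ 0 = 7*a * x$0"
  unfolding DD_def nat17 by (simp_all add: e_comp seven)

lemma e_comps: "e 1 $ 1 = 1" "e 2 $ 2 = 1" "e 3 $ 3 = 1" "e 4 $ 4 = 1" "e 5 $ 5 = 1" "e 6 $ 6 = 1" "e 7 $ 0 = 1"
  by (simp_all add: e_comp)

lemma DD_der: "is_derivation (nbr t) (DD a)"
  unfolding is_derivation_def linear_iff
  by (simp add: vec7_eq' nbrc DD_comp algebra_simps)

lemma ipP_ip: assumes p: "\<forall>k\<in>{1..7}. p k > 0" shows "is_inner_product (ipP p)"
  unfolding is_inner_product_def
proof (intro conjI allI impI)
  show "bilinear (ipP p)" unfolding bilinear_def linear_iff by (simp add: ipP_exp algebra_simps)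
  fix x y :: "real^7"
  show "ipP p x y = ipP p y x" by (simp add: ipP_exp algebra_simps)
next
  fix x :: "real^7" assume "x \<noteq> 0"
  then have nz: "x$1 \<noteq> 0 \<or> x$2 \<noteq> 0 \<or> x$3 \<noteq> 0 \<or> x$4 \<noteq> 0 \<or> x$5 \<noteq> 0 \<or> x$6 \<noteq> 0 \<or> x$0 \<noteq> 0"
    by (simp add: vec7_eq')
  have pp: "p 1 > 0" "p 2 > 0" "p 3 > 0" "p 4 > 0" "p 5 > 0" "p 6 > 0" "p 7 > 0"
    using p unfolding nat17 by auto
  have sq: "\<And>a (z::real). a > 0 \<Longrightarrow> a * z * z \<ge> 0" "\<And>a (z::real). a > 0 \<Longrightarrow> z \<noteq> 0 \<Longrightarrow> a * z * z > 0"
    by (simp add: mult.assoc) (metis mult_pos_pos mult.assoc not_real_square_gt_zero)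
  show "ipP p x x > 0" unfolding ipP_exp
    using nz sq(1)[OF pp(1), of "x$1"] sq(1)[OF pp(2), of "x$2"] sq(1)[OF pp(3), of "x$3"]
      sq(1)[OF pp(4), of "x$4"] sq(1)[OF pp(5), of "x$5"] sq(1)[OF pp(6), of "x$6"] sq(1)[OF pp(7), of "x$0"]
      sq(2)[OF pp(1), of "x$1"] sq(2)[OF pp(2), of "x$2"] sq(2)[OF pp(3), of "x$3"]
      sq(2)[OF pp(4), of "x$4"] sq(2)[OF pp(5), of "x$5"] sq(2)[OF pp(6), of "x$6"] sq(2)[OF pp(7), of "x$0"]
    by linarith
qed

lemma ipP_e: assumes "l \<in> {1..7}" shows "ipP p x (e l) = p l * x $ of_nat l"
  using assms unfolding ipP_def nat17 by (auto simp: e_comp)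

definition gP :: "(nat \<Rightarrow> real) \<Rightarrow> nat \<Rightarrow> real^7" where
  "gP p k = (1 / sqrt (p k)) *\<^sub>R e k"

lemma e_comp_nat: "k \<in> {1..7} \<Longrightarrow> l \<in> {1..7} \<Longrightarrow> e k $ of_nat l = (if k = l then 1 else 0)"
  using inj7 by (auto simp: e_comp inj_on_eq_iff)

lemma gP_on: assumes p: "\<forall>k\<in>{1..7}. p k > 0" shows "orthonormal_on (ipP p) {1..7} (gP p)"
  unfolding orthonormal_on_def
proof (intro ballI)
  fix k l :: nat assume k: "k \<in> {1..7}" and l: "l \<in> {1..7}"
  have ipl: "is_inner_product (ipP p)" using ipP_ip[OF p] .
  have "ipP p (gP p k) (gP p l) = (1 / sqrt (p k)) * (1 / sqrt (p l)) * ipP p (e k) (e l)"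
    unfolding gP_def by (simp add: ip_scale1[OF ipl] ip_scale2[OF ipl])
  also have "\<dots> = (1 / sqrt (p k)) * (1 / sqrt (p l)) * p l * (if k = l then 1 else 0)"
    using ipP_e[OF l] e_comp_nat[OF k l] by simp
  also have "\<dots> = (if k = l then 1 else 0)"
  proof -
    have "p l > 0" using p l by blast
    then show ?thesis by (auto simp: field_simps)
  qed
  finally show "ipP p (gP p k) (gP p l) = (if k = l then 1 else 0)" .
qed

definition idx :: "7 \<Rightarrow> nat" where "idx i = (SOME k. k \<in> {1..7} \<and> of_nat k = i)"

lemma idx: "idx i \<in> {1..7}" "of_nat (idx i) = i"
proof -
  have "i \<in> of_nat ` {1..7}" using UNIV7 by simp
  then have "\<exists>k. k \<in> {1..7} \<and> of_nat k = i" by auto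
  then show "idx i \<in> {1..7}" "of_nat (idx i) = i" unfolding idx_def by (metis (mono_tags, lifting) someI_ex)+
qed

lemma idx_inj: "idx i = idx j \<longleftrightarrow> i = j"
  using idx(2) by metis

lemma basis_exists:
  assumes ip: "is_inner_product ip" and on: "orthonormal_on ip {1..7} g"
  shows "is_orthonormal_basis ip (\<lambda>i. g (idx i))"
  using on idx(1) idx_inj unfolding is_orthonormal_basis_def orthonormal_on_def by auto


lemma ipP_gP: assumes p: "\<forall>k\<in>{1..7}. p k > 0" and l: "l \<in> {1..7}"
  shows "ipP p u (gP p l) = sqrt (p l) * u $ of_nat l"
proof -
  have ipl: "is_inner_product (ipP p)" using ipP_ip[OF p] .
  have "p l > 0" using p l by blast
  then have s: "sqrt (p l) * sqrt (p l) = p l" "sqrt (p l) > 0" by simp_all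
  show ?thesis unfolding gP_def ip_scale2[OF ipl] ipP_e[OF l]
    using s by (simp add: field_simps)
qed

lemma ric_P:
  fixes x y :: "real^7"
  assumes p: "\<forall>k\<in>{1..7}. p k > 0" and b: "is_orthonormal_basis (ipP p) b"
  shows "ricci_form_nil (ipP p) b (nbr t) x y =
    - (1/2) * (\<Sum>k\<in>{1..7}. \<Sum>l\<in>{1..7}. (p l / p k) * (nbr t x (e k) $ of_nat l) * (nbr t y (e k) $ of_nat l))
    + (1/4) * (\<Sum>k\<in>{1..7}. \<Sum>l\<in>{1..7}. (1/(p k * p l)) * ipP p (nbr t (e k) (e l)) x * ipP p (nbr t (e k) (e l)) y)"
proof -
  have ipl: "is_inner_product (ipP p)" using ipP_ip[OF p] .
  have BL1: "linear (\<lambda>u. nbr t u w)" for w using bilinear_nbr[of t] by (simp add: bilinear_def)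
  have BL2: "linear (nbr t w)" for w using bilinear_nbr[of t] by (simp add: bilinear_def)
  have c: "card {1..7::nat} = CARD(7)" by simp
  note R = ricci_onb[OF ipl finite_atLeastAtMost c gP_on[OF p] b bilinear_nbr[of t], of x y]
  have S1: "ipP p (nbr t x (gP p k)) (gP p l) * ipP p (nbr t y (gP p k)) (gP p l) =
       p l / p k * nbr t x (e k) $ of_nat l * nbr t y (e k) $ of_nat l" if k: "k \<in> {1..7}" and l: "l \<in> {1..7}" for k l
  proof -
    have pk: "p k > 0" and pl: "p l > 0" using p k l by auto
    have s: "sqrt (p l) * sqrt (p l) = p l" "sqrt (p l) > 0" "sqrt (p k) * sqrt (p k) = p k" "sqrt (p k) > 0"
      using pk pl by simp_all
    show ?thesis
      unfolding ipP_gP[OF p l] unfolding gP_def linear_cmul[OF BL2]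
      using s by (simp add: field_simps)
  qed
  have S2: "ipP p (nbr t (gP p k) (gP p l)) x * ipP p (nbr t (gP p k) (gP p l)) y =
       1 / (p k * p l) * ipP p (nbr t (e k) (e l)) x * ipP p (nbr t (e k) (e l)) y" if k: "k \<in> {1..7}" and l: "l \<in> {1..7}" for k l
  proof -
    have pk: "p k > 0" and pl: "p l > 0" using p k l by auto
    have s: "sqrt (p l) * sqrt (p l) = p l" "sqrt (p l) > 0" "sqrt (p k) * sqrt (p k) = p k" "sqrt (p k) > 0"
      using pk pl by simp_all
    show ?thesis
      unfolding gP_def linear_cmul[OF BL2] linear_cmul[OF BL1] ip_scale1[OF ipl]
      using s by (simp add: field_simps)
  qed
  have E1: "(\<Sum>k\<in>{1..7}. \<Sum>l\<in>{1..7}. ipP p (nbr t x (gP p k)) (gP p l) * ipP p (nbr t y (gP p k)) (gP p l))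
     = (\<Sum>k\<in>{1..7}. \<Sum>l\<in>{1..7}. p l / p k * nbr t x (e k) $ of_nat l * nbr t y (e k) $ of_nat l)"
    by (rule sum.cong[OF refl], rule sum.cong[OF refl], rule S1)
  have E2: "(\<Sum>k\<in>{1..7}. \<Sum>l\<in>{1..7}. ipP p (nbr t (gP p k) (gP p l)) x * ipP p (nbr t (gP p k) (gP p l)) y)
     = (\<Sum>k\<in>{1..7}. \<Sum>l\<in>{1..7}. 1 / (p k * p l) * ipP p (nbr t (e k) (e l)) x * ipP p (nbr t (e k) (e l)) y)"
    by (rule sum.cong[OF refl], rule sum.cong[OF refl], rule S2)
  show ?thesis by (simp only: R E1 E2)
qed

lemma ric_explicit:
  fixes x y :: "real^7"
  assumes p: "\<forall>k\<in>{1..7}. p k > 0" and b: "is_orthonormal_basis (ipP p) b"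
  shows "ricci_form_nil (ipP p) b (nbr t) x y =
    (1/2) * (
      x$1*y$1 * p 1 * (- p 3/(p 1*p 2) - p 4/(p 1*p 3) - p 5/(p 1*p 4) - p 6/(p 1*p 5) - p 7/(p 1*p 6))
    + x$2*y$2 * p 2 * (- p 3/(p 1*p 2) - p 5/(p 2*p 3) - p 6/(p 2*p 4) - t^2*p 7/(p 2*p 5))
    + x$3*y$3 * p 3 * (p 3/(p 1*p 2) - p 4/(p 1*p 3) - p 5/(p 2*p 3) - (1-t)^2*p 7/(p 3*p 4))
    + x$4*y$4 * p 4 * (p 4/(p 1*p 3) - p 5/(p 1*p 4) - p 6/(p 2*p 4) - (1-t)^2*p 7/(p 3*p 4))
    + x$5*y$5 * p 5 * (p 5/(p 1*p 4) + p 5/(p 2*p 3) - p 6/(p 1*p 5) - t^2*p 7/(p 2*p 5))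
    + x$6*y$6 * p 6 * (p 6/(p 1*p 5) + p 6/(p 2*p 4) - p 7/(p 1*p 6))
    + x$0*y$0 * p 7 * (p 7/(p 1*p 6) + t^2*p 7/(p 2*p 5) + (1-t)^2*p 7/(p 3*p 4)))"
proof -
  have pp: "p 1 > 0" "p 2 > 0" "p 3 > 0" "p 4 > 0" "p 5 > 0" "p 6 > 0" "p 7 > 0"
    using p unfolding nat17 by auto
  show ?thesis
    unfolding ric_P[OF p b] nat17
    apply (simp add: nbrc e_comp ipP_exp seven)
    using pp apply (simp add: field_simps power2_eq_square)
    done
qed

lemma nil_diag:
  assumes p: "\<forall>k\<in>{1..7}. p k > 0"
    and v1: "p 3/(p 1*p 2) = a1" and v2: "p 4/(p 1*p 3) = a2" and v3: "p 5/(p 1*p 4) = a3"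
    and v4: "p 6/(p 1*p 5) = a4" and v5: "p 7/(p 1*p 6) = a5" and v6: "p 5/(p 2*p 3) = a6"
    and v7: "p 6/(p 2*p 4) = a7" and v8: "t^2*p 7/(p 2*p 5) = a8" and v9: "(1-t)^2*p 7/(p 3*p 4) = a9"
    and r1: "- a1 - a2 - a3 - a4 - a5 = 2*c + 2*\<alpha>"
    and r2: "- a1 - a6 - a7 - a8 = 2*c + 4*\<alpha>"
    and r3: "a1 - a2 - a6 - a9 = 2*c + 6*\<alpha>"
    and r4: "a2 - a3 - a7 - a9 = 2*c + 8*\<alpha>"
    and r5: "a3 + a6 - a4 - a8 = 2*c + 10*\<alpha>"
    and r6: "a4 + a7 - a5 = 2*c + 12*\<alpha>"
    and r7: "a5 + a8 + a9 = 2*c + 14*\<alpha>"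
  shows "is_nilsoliton (nbr t) (ipP p)"
  unfolding is_nilsoliton_def
proof (intro exI conjI allI)
  have ipl: "is_inner_product (ipP p)" using ipP_ip[OF p] .
  show b: "is_orthonormal_basis (ipP p) (\<lambda>i. gP p (idx i))"
    by (rule basis_exists[OF ipl gP_on[OF p]])
  show "is_derivation (nbr t) (DD \<alpha>)" by (rule DD_der)
  fix x y :: "real^7"
  show "ricci_form_nil (ipP p) (\<lambda>i. gP p (idx i)) (nbr t) x y = ipP p (c *\<^sub>R x + DD \<alpha> x) y"
    unfolding ric_explicit[OF p b] v1 v2 v3 v4 v5 v6 v7 v8 v9
      minus_divide_left[symmetric] r1 r2 r3 r4 r5 r6 r7
    by (simp add: ipP_exp DD_comp algebra_simps)
qed
lemma cubic_root:
  fixes m :: real assumes m: "m > 0"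
  shows "\<exists>Q. 2/3 < Q \<and> Q < 6/5 \<and> m^2 * Q^2 * (3*Q - 2) = (6 - 5*Q)^2"
proof -
  let ?f = "\<lambda>Q::real. m^2 * Q^2 * (3*Q - 2) - (6 - 5*Q)^2"
  have c: "continuous_on {2/3..6/5} ?f" by (intro continuous_intros)
  have a: "?f (2/3) < 0" by (simp add: power2_eq_square)
  have b: "?f (6/5) > 0" using m by (simp add: power2_eq_square)
  obtain Q where Q: "2/3 \<le> Q" "Q \<le> 6/5" "?f Q = 0"
    using IVT'[of ?f "2/3" 0 "6/5"] a b c by force
  have "Q \<noteq> 2/3" using Q(3) a by (metis less_irrefl)
  moreover have "Q \<noteq> 6/5" using Q(3) b by (metis less_irrefl)
  ultimately show ?thesis using Q by (intro exI[of _ Q]) auto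
qed

lemma pos_dir:
  assumes t0: "t \<noteq> 0" and t1: "t \<noteq> 1"
  shows "einstein_nilradical (nbr t)"
proof -
  define r where "r = \<bar>t\<bar>"
  define s where "s = \<bar>1 - t\<bar>"
  define m where "m = r + s"
  have r: "r > 0" using t0 by (simp add: r_def)
  have s: "s > 0" using t1 by (simp add: s_def)
  have m: "m > 0" using r s by (simp add: m_def)
  obtain Q where Q1: "2/3 < Q" and Q2: "Q < 6/5" and Qc: "m^2 * Q^2 * (3*Q - 2) = (6 - 5*Q)^2"
    using cubic_root[OF m] by blast
  define K where "K = (6 - 5*Q) / ((2 - Q) * m)"
  have K: "K > 0" using Q1 Q2 m by (simp add: K_def)
  have mK: "m * K = (6 - 5*Q) / (2 - Q)" using m Q2 by (simp add: K_def field_simps)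
  have key: "Q^2 * (2 - m*K) = (2 - Q) * K^2"
  proof -
    have "2 - m*K = (3*Q - 2)/(2 - Q)" using Q2 unfolding mK by (simp add: field_simps)
    then have "Q^2 * (2 - m*K) = Q^2*(3*Q-2)/(2-Q)" by simp
    also have "\<dots> = (6-5*Q)^2 / (m^2 * (2-Q))" using Qc m Q2 by (simp add: field_simps)
    also have "\<dots> = (2 - Q) * K^2"
    proof -
      have aux: "\<And>d m A::real. d \<noteq> 0 \<Longrightarrow> m \<noteq> 0 \<Longrightarrow> A/(m^2*d) = d * (A/(d^2*m^2))"
        by (simp add: field_simps power2_eq_square)
      have "2 - Q \<noteq> 0" using Q2 by simp
      then show ?thesis using m aux unfolding K_def power_divide power_mult_distrib by simp
    qed
    finally show ?thesis .
  qed
  define a1 where "a1 = s*K"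
  define a2 where "a2 = 2 - Q"
  define a3 where "a3 = r*K"
  define a4 where "a4 = Q"
  define a5 where "a5 = 2 - m*K"
  define a6 where "a6 = Q"
  define a7 where "a7 = Q^2/(2-Q)"
  define a8 where "a8 = r*K"
  define a9 where "a9 = s*K"
  define X where "X = (2-Q)*r*K/Q"
  have pa: "a1 > 0" "a2 > 0" "a3 > 0" "a4 > 0" "a5 > 0" "X > 0"
  proof -
    show "a1 > 0" "a2 > 0" "a3 > 0" "a4 > 0" unfolding a1_def a2_def a3_def a4_def using s K r Q1 Q2 by auto
    have "2 - m*K = (3*Q - 2)/(2 - Q)" using Q2 unfolding mK by (simp add: field_simps)
    then show "a5 > 0" unfolding a5_def using Q1 Q2 by simp
    show "X > 0" unfolding X_def using Q1 Q2 r K by simp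
  qed
  define p where "p = (\<lambda>k::nat. if k = 1 then 1 else if k = 2 then X else if k = 3 then a1*X
     else if k = 4 then a2*a1*X else if k = 5 then a3*a2*a1*X else if k = 6 then a4*a3*a2*a1*X
     else a5*a4*a3*a2*a1*X)"
  have pv: "p 1 = 1" "p 2 = X" "p 3 = a1*X" "p 4 = a2*a1*X" "p 5 = a3*a2*a1*X" "p 6 = a4*a3*a2*a1*X"
     "p 7 = a5*a4*a3*a2*a1*X" "p (Suc 0) = 1" by (simp_all add: p_def)
  have ppos: "\<forall>k\<in>{1..7}. p k > 0" unfolding nat17 using pa by (auto simp: p_def)
  have X: "X * Q = (2-Q)*r*K" using Q1 by (simp add: X_def)
  have a7: "a7 * (2 - Q) = Q^2" using Q2 by (simp add: a7_def)
  have t2: "t^2 = r^2" "(1-t)^2 = s^2" by (simp_all add: r_def s_def)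
  have "is_nilsoliton (nbr t) (ipP p)"
  proof (rule nil_diag[OF ppos])
    show "p 3/(p 1*p 2) = a1" "p 4/(p 1*p 3) = a2" "p 5/(p 1*p 4) = a3" "p 6/(p 1*p 5) = a4"
      "p 7/(p 1*p 6) = a5" using pa by (simp_all add: pv)
    have XQ: "a3*a2 = X*Q"
    proof -
      have "a3*a2 = (2-Q)*r*K" by (simp add: a2_def a3_def)
      then show ?thesis using X by simp
    qed
    have Q0: "Q > 0" "2 - Q > 0" using Q1 Q2 by auto
    have KQ: "a5*a4^2 = (2-Q)*K^2" using key by (simp add: a5_def a4_def algebra_simps)
    have "p 5/(p 2*p 3) = a3*a2/X" using pa by (simp add: pv field_simps)
    also have "\<dots> = a6" using XQ pa by (simp add: a6_def)
    finally show "p 5/(p 2*p 3) = a6" .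
    have "p 6/(p 2*p 4) = a4*a3/X" using pa by (simp add: pv field_simps)
    also have "\<dots> = a4*(a3*a2)/(X*a2)" using pa by simp
    also have "\<dots> = a7" using XQ pa Q0 by (simp add: a7_def a4_def a2_def power2_eq_square)
    finally show "p 6/(p 2*p 4) = a7" .
    have "t^2*p 7/(p 2*p 5) = r^2*a5*a4/X" using pa by (simp add: pv t2 field_simps)
    also have "\<dots> = r^2*(a5*a4^2)/(X*Q)" using pa by (simp add: a4_def field_simps power2_eq_square)
    also have "\<dots> = a8" unfolding KQ XQ[symmetric] using pa r K Q0
      by (simp add: a8_def a3_def a2_def field_simps power2_eq_square)
    finally show "t^2*p 7/(p 2*p 5) = a8" .
    have "(1-t)^2*p 7/(p 3*p 4) = s^2*a5*a4*a3/(a1*X)" using pa by (simp add: pv t2 field_simps)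
    also have "\<dots> = s^2*(a5*a4^2)*a3/(a1*(X*Q))" using pa by (simp add: a4_def field_simps power2_eq_square)
    also have "\<dots> = a9" unfolding KQ XQ[symmetric] using pa r s K Q0
      by (simp add: a9_def a1_def a2_def a3_def field_simps power2_eq_square)
    finally show "(1-t)^2*p 7/(p 3*p 4) = a9" .
    show "- a1 - a2 - a3 - a4 - a5 = 2*(-5/2) + 2*(1/2)"
      by (simp add: a1_def a2_def a3_def a4_def a5_def m_def algebra_simps)
    have S: "Q + a7 + m*K = 3"
    proof -
      have mK2: "m*K*(2-Q) = 6 - 5*Q" using Q0 unfolding mK by simp
      have "(Q + a7 + m*K)*(2-Q) = Q*(2-Q) + a7*(2-Q) + m*K*(2-Q)" by (simp add: algebra_simps)
      also have "\<dots> = 3*(2-Q)" unfolding a7 mK2 by (simp add: algebra_simps power2_eq_square)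
      finally have "(Q + a7 + m*K)*(2-Q) = 3*(2-Q)" .
      then show ?thesis using Q0 by (metis mult_right_cancel less_irrefl)
    qed
    show "- a1 - a6 - a7 - a8 = 2*(-5/2) + 4*(1/2)" using S
      by (simp add: a1_def a6_def a8_def m_def algebra_simps)
    show "a1 - a2 - a6 - a9 = 2*(-5/2) + 6*(1/2)" by (simp add: a1_def a2_def a6_def a9_def)
    show "a2 - a3 - a7 - a9 = 2*(-5/2) + 8*(1/2)" using S by (simp add: a2_def a3_def a9_def m_def algebra_simps)
    show "a3 + a6 - a4 - a8 = 2*(-5/2) + 10*(1/2)" by (simp add: a3_def a6_def a4_def a8_def)
    show "a4 + a7 - a5 = 2*(-5/2) + 12*(1/2)" using S by (simp add: a4_def a5_def algebra_simps)
    show "a5 + a8 + a9 = 2*(-5/2) + 14*(1/2)" by (simp add: a5_def a8_def a9_def m_def algebra_simps)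
  qed
  then show ?thesis unfolding einstein_nilradical_def using ipP_ip[OF ppos] by blast
qed

lemma e_vec: "e k = axis (of_nat k) 1" by (simp add: e_def)

lemma nbr_ee: "nbr t (e 1) (e 2) = e 3" "nbr t (e 1) (e 3) = e 4" "nbr t (e 1) (e 4) = e 5"
  "nbr t (e 1) (e 5) = e 6" "nbr t (e 1) (e 6) = e 7" "nbr t (e 1) (e 7) = 0"
  "nbr t (e 2) (e 3) = e 5" "nbr t (e 2) (e 4) = e 6" "nbr t (e 2) (e 5) = t *\<^sub>R e 7"
  "nbr t (e 2) (e 6) = 0" "nbr t (e 3) (e 4) = (1-t) *\<^sub>R e 7" "nbr t (e 3) (e 5) = 0"
  by (simp_all add: vec7_eq' nbrc e_comp)

lemma D_struct_eqs:
  assumes der: "is_derivation (nbr t) D"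
  shows "D (e 3) = nbr t (D (e 1)) (e 2) + nbr t (e 1) (D (e 2))"
    and "D (e 4) = nbr t (D (e 1)) (e 3) + nbr t (e 1) (D (e 3))"
    and "D (e 5) = nbr t (D (e 1)) (e 4) + nbr t (e 1) (D (e 4))"
    and "D (e 6) = nbr t (D (e 1)) (e 5) + nbr t (e 1) (D (e 5))"
    and "D (e 7) = nbr t (D (e 1)) (e 6) + nbr t (e 1) (D (e 6))"
    and "0 = nbr t (D (e 1)) (e 7) + nbr t (e 1) (D (e 7))"
    and "D (e 5) = nbr t (D (e 2)) (e 3) + nbr t (e 2) (D (e 3))"
    and "D (e 6) = nbr t (D (e 2)) (e 4) + nbr t (e 2) (D (e 4))"
    and "t *\<^sub>R D (e 7) = nbr t (D (e 2)) (e 5) + nbr t (e 2) (D (e 5))"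
    and "0 = nbr t (D (e 2)) (e 6) + nbr t (e 2) (D (e 6))"
    and "(1-t) *\<^sub>R D (e 7) = nbr t (D (e 3)) (e 4) + nbr t (e 3) (D (e 4))"
    and "0 = nbr t (D (e 3)) (e 5) + nbr t (e 3) (D (e 5))"
proof -
  have lin: "linear D" and d: "\<And>x y. D (nbr t x y) = nbr t (D x) y + nbr t x (D y)"
    using der unfolding is_derivation_def by auto
  have D0: "D 0 = 0" using linear_0[OF lin] .
  have Ds: "D (a *\<^sub>R v) = a *\<^sub>R D v" for a v using linear_cmul[OF lin] .
  show "D (e 3) = nbr t (D (e 1)) (e 2) + nbr t (e 1) (D (e 2))" using d[of "e 1" "e 2"] unfolding nbr_ee by (simp add: D0 Ds)
  show "D (e 4) = nbr t (D (e 1)) (e 3) + nbr t (e 1) (D (e 3))" using d[of "e 1" "e 3"] unfolding nbr_ee by (simp add: D0 Ds)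
  show "D (e 5) = nbr t (D (e 1)) (e 4) + nbr t (e 1) (D (e 4))" using d[of "e 1" "e 4"] unfolding nbr_ee by (simp add: D0 Ds)
  show "D (e 6) = nbr t (D (e 1)) (e 5) + nbr t (e 1) (D (e 5))" using d[of "e 1" "e 5"] unfolding nbr_ee by (simp add: D0 Ds)
  show "D (e 7) = nbr t (D (e 1)) (e 6) + nbr t (e 1) (D (e 6))" using d[of "e 1" "e 6"] unfolding nbr_ee by (simp add: D0 Ds)
  show "0 = nbr t (D (e 1)) (e 7) + nbr t (e 1) (D (e 7))" using d[of "e 1" "e 7"] unfolding nbr_ee by (simp add: D0 Ds)
  show "D (e 5) = nbr t (D (e 2)) (e 3) + nbr t (e 2) (D (e 3))" using d[of "e 2" "e 3"] unfolding nbr_ee by (simp add: D0 Ds)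
  show "D (e 6) = nbr t (D (e 2)) (e 4) + nbr t (e 2) (D (e 4))" using d[of "e 2" "e 4"] unfolding nbr_ee by (simp add: D0 Ds)
  show "t *\<^sub>R D (e 7) = nbr t (D (e 2)) (e 5) + nbr t (e 2) (D (e 5))" using d[of "e 2" "e 5"] unfolding nbr_ee by (simp add: D0 Ds)
  show "0 = nbr t (D (e 2)) (e 6) + nbr t (e 2) (D (e 6))" using d[of "e 2" "e 6"] unfolding nbr_ee by (simp add: D0 Ds)
  show "(1-t) *\<^sub>R D (e 7) = nbr t (D (e 3)) (e 4) + nbr t (e 3) (D (e 4))" using d[of "e 3" "e 4"] unfolding nbr_ee by (simp add: D0 Ds)
  show "0 = nbr t (D (e 3)) (e 5) + nbr t (e 3) (D (e 5))" using d[of "e 3" "e 5"] unfolding nbr_ee by (simp add: D0 Ds)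
qed

lemma D_struct_comp:
  assumes der: "is_derivation (nbr t) D" and t01: "t = 0 \<or> t = 1"
  shows "D (e 2) $ 1 = 0" "D (e 3) $ 1 = 0" "D (e 3) $ 2 = 0"
    "D (e 4) $ 1 = 0" "D (e 4) $ 2 = 0" "D (e 4) $ 3 = 0"
    "D (e 5) $ 1 = 0" "D (e 5) $ 2 = 0" "D (e 5) $ 3 = 0" "D (e 5) $ 4 = 0"
    "D (e 6) $ 1 = 0" "D (e 6) $ 2 = 0" "D (e 6) $ 3 = 0" "D (e 6) $ 4 = 0" "D (e 6) $ 5 = 0"
    "D (e 7) $ 1 = 0" "D (e 7) $ 2 = 0" "D (e 7) $ 3 = 0" "D (e 7) $ 4 = 0" "D (e 7) $ 5 = 0" "D (e 7) $ 6 = 0"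
    "D (e 2) $ 2 = 2 * D (e 1) $ 1" "D (e 3) $ 3 = 3 * D (e 1) $ 1" "D (e 4) $ 4 = 4 * D (e 1) $ 1"
    "D (e 5) $ 5 = 5 * D (e 1) $ 1" "D (e 6) $ 6 = 6 * D (e 1) $ 1" "D (e 7) $ 0 = 7 * D (e 1) $ 1"
proof -
  note E = D_struct_eqs[OF der]
  note C = E(1)[unfolded vec7_eq'] E(2)[unfolded vec7_eq'] E(3)[unfolded vec7_eq'] E(4)[unfolded vec7_eq']
    E(5)[unfolded vec7_eq'] E(6)[unfolded vec7_eq'] E(7)[unfolded vec7_eq'] E(8)[unfolded vec7_eq']
    E(9)[unfolded vec7_eq'] E(10)[unfolded vec7_eq'] E(11)[unfolded vec7_eq'] E(12)[unfolded vec7_eq']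
  have F: "\<forall>k l. (k = 1 \<or> k = 2 \<or> k = 3 \<or> k = 4 \<or> k = 5 \<or> k = 6 \<or> k = 7) \<longrightarrow> True" by simp
  from t01 show "D (e 2) $ 1 = 0" "D (e 3) $ 1 = 0" "D (e 3) $ 2 = 0"
    "D (e 4) $ 1 = 0" "D (e 4) $ 2 = 0" "D (e 4) $ 3 = 0"
    "D (e 5) $ 1 = 0" "D (e 5) $ 2 = 0" "D (e 5) $ 3 = 0" "D (e 5) $ 4 = 0"
    "D (e 6) $ 1 = 0" "D (e 6) $ 2 = 0" "D (e 6) $ 3 = 0" "D (e 6) $ 4 = 0" "D (e 6) $ 5 = 0"
    "D (e 7) $ 1 = 0" "D (e 7) $ 2 = 0" "D (e 7) $ 3 = 0" "D (e 7) $ 4 = 0" "D (e 7) $ 5 = 0" "D (e 7) $ 6 = 0"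
    "D (e 2) $ 2 = 2 * D (e 1) $ 1" "D (e 3) $ 3 = 3 * D (e 1) $ 1" "D (e 4) $ 4 = 4 * D (e 1) $ 1"
    "D (e 5) $ 5 = 5 * D (e 1) $ 1" "D (e 6) $ 6 = 6 * D (e 1) $ 1" "D (e 7) $ 0 = 7 * D (e 1) $ 1"
    using C by (auto simp: nbrc e_comp seven)
qed


definition GS :: "(real^7 \<Rightarrow> real^7 \<Rightarrow> real) \<Rightarrow> nat \<Rightarrow> (nat \<Rightarrow> real^7) \<Rightarrow> bool" where
  "GS ip k g \<longleftrightarrow> (\<forall>a\<in>{k..7}. \<forall>b\<in>{k..7}. ip (g a) (g b) = (if a = b then 1 else 0))
     \<and> (\<forall>a\<in>{k..7}. \<forall>i\<in>{1..7}. i < a \<longrightarrow> g a $ of_nat i = 0)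
     \<and> (\<forall>a\<in>{k..7}. g a $ of_nat a \<noteq> 0)
     \<and> (\<forall>a\<in>{k..7}. e a = (\<Sum>a'\<in>{a..7}. ip (e a) (g a') *\<^sub>R g a'))"

lemma GS_step:
  assumes ip: "is_inner_product ip" and n: "1 \<le> n" "n < 8" and G: "GS ip (Suc n) g"
  shows "\<exists>g'. GS ip n g'"
proof -
  have on: "\<And>a b. a \<in> {Suc n..7} \<Longrightarrow> b \<in> {Suc n..7} \<Longrightarrow> ip (g a) (g b) = (if a = b then 1 else 0)"
    and co: "\<And>a i. a \<in> {Suc n..7} \<Longrightarrow> i \<in> {1..7} \<Longrightarrow> i < a \<Longrightarrow> g a $ of_nat i = 0"
    and dg: "\<And>a. a \<in> {Suc n..7} \<Longrightarrow> g a $ of_nat a \<noteq> 0"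
    and ex: "\<And>a. a \<in> {Suc n..7} \<Longrightarrow> e a = (\<Sum>a'\<in>{a..7}. ip (e a) (g a') *\<^sub>R g a')"
    using G unfolding GS_def by auto
  define h where "h = e n - (\<Sum>a\<in>{Suc n..7}. ip (e n) (g a) *\<^sub>R g a)"
  have nn: "n \<in> {1..7}" using n by auto
  have hc: "h $ of_nat i = 0" if "i \<in> {1..7}" "i < n" for i
  proof -
    have "e n $ of_nat i = 0" using e_comp_nat[OF nn that(1)] that by simp
    moreover have "(\<Sum>a\<in>{Suc n..7}. ip (e n) (g a) * g a $ of_nat i) = 0"
      by (rule sum.neutral) (use co that in auto)
    ultimately show ?thesis by (simp add: h_def)
  qed
  have hn: "h $ of_nat n = 1"
  proof -
    have "e n $ of_nat n = 1" using e_comp_nat[OF nn nn] by simp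
    moreover have "(\<Sum>a\<in>{Suc n..7}. ip (e n) (g a) * g a $ of_nat n) = 0"
      by (rule sum.neutral) (use co nn in auto)
    ultimately show ?thesis by (simp add: h_def)
  qed
  have hg: "ip h (g l) = 0" if l: "l \<in> {Suc n..7}" for l
  proof -
    have "ip h (g l) = ip (e n) (g l) - (\<Sum>a\<in>{Suc n..7}. ip (e n) (g a) * ip (g a) (g l))"
      by (simp add: h_def ip_diff1[OF ip] ip_sum1[OF ip] ip_scale1[OF ip])
    also have "(\<Sum>a\<in>{Suc n..7}. ip (e n) (g a) * ip (g a) (g l)) = (\<Sum>a\<in>{Suc n..7}. if a = l then ip (e n) (g l) else 0)"
      by (rule sum.cong[OF refl]) (use on l in auto)
    also have "\<dots> = ip (e n) (g l)" using l by simp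
    finally show ?thesis by simp
  qed
  have h0: "h \<noteq> 0" using hn by auto
  have hh: "ip h h > 0" using ip h0 unfolding is_inner_product_def by blast
  define q where "q = sqrt (ip h h)"
  have q: "q > 0" "q * q = ip h h" using hh by (simp_all add: q_def)
  define g' where "g' = g(n := (1/q) *\<^sub>R h)"
  have g'n: "g' n = (1/q) *\<^sub>R h" by (simp add: g'_def)
  have g'o: "g' a = g a" if "a \<in> {Suc n..7}" for a using that by (simp add: g'_def)
  have ipn: "ip (e n) h = ip h h"
  proof -
    have "ip (e n) h = ip (h + (\<Sum>a\<in>{Suc n..7}. ip (e n) (g a) *\<^sub>R g a)) h" by (simp add: h_def)
    also have "\<dots> = ip h h + (\<Sum>a\<in>{Suc n..7}. ip (e n) (g a) * ip (g a) h)"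
      by (simp add: ip_add1[OF ip] ip_sum1[OF ip] ip_scale1[OF ip])
    also have "(\<Sum>a\<in>{Suc n..7}. ip (e n) (g a) * ip (g a) h) = 0"
      by (rule sum.neutral) (use hg ip_sym[OF ip, of h] in auto)
    finally show ?thesis by simp
  qed
  have split: "{n..7} = insert n {Suc n..7}" using n by auto
  have "GS ip n g'"
    unfolding GS_def
  proof (intro conjI ballI impI)
    fix a b assume a: "a \<in> {n..7}" and b: "b \<in> {n..7}"
    show "ip (g' a) (g' b) = (if a = b then 1 else 0)"
    proof (cases "a = n")
      case True
      show ?thesis
      proof (cases "b = n")
        case True
        then show ?thesis using \<open>a = n\<close> q hh
          by (simp add: g'n ip_scale1[OF ip] ip_scale2[OF ip] field_simps)
      next
        case False
        then have "b \<in> {Suc n..7}" using b by auto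
        then show ?thesis using \<open>a = n\<close> False
          by (simp add: g'n g'o ip_scale1[OF ip] hg)
      qed
    next
      case False
      then have a': "a \<in> {Suc n..7}" using a by auto
      show ?thesis
      proof (cases "b = n")
        case True
        then show ?thesis using a' False
          by (simp add: g'n g'o ip_scale2[OF ip] ip_sym[OF ip, of "g a"] hg)
      next
        case False
        then have "b \<in> {Suc n..7}" using b by auto
        then show ?thesis using a' by (simp add: g'o on)
      qed
    qed
  next
    fix a i assume a: "a \<in> {n..7}" and i: "i \<in> {1..7}" and ia: "i < a"
    show "g' a $ of_nat i = 0"
    proof (cases "a = n")
      case True then show ?thesis using hc[OF i] ia by (simp add: g'n)
    next
      case False then show ?thesis using a i ia co g'o by auto
    qed
  next
    fix a assume a: "a \<in> {n..7}"
    show "g' a $ of_nat a \<noteq> 0"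
    proof (cases "a = n")
      case True then show ?thesis using hn q by (simp add: g'n)
    next
      case False then show ?thesis using a dg g'o by auto
    qed
  next
    fix a assume a: "a \<in> {n..7}"
    show "e a = (\<Sum>a'\<in>{a..7}. ip (e a) (g' a') *\<^sub>R g' a')"
    proof (cases "a = n")
      case True
      have "(\<Sum>a'\<in>{n..7}. ip (e n) (g' a') *\<^sub>R g' a') =
          ip (e n) (g' n) *\<^sub>R g' n + (\<Sum>a'\<in>{Suc n..7}. ip (e n) (g a') *\<^sub>R g a')"
        unfolding split by (simp add: g'o)
      also have "ip (e n) (g' n) *\<^sub>R g' n = h"
        using q hh by (simp add: g'n ip_scale2[OF ip] ipn field_simps)
      finally show ?thesis using True by (simp add: h_def)
    next
      case False
      then have a': "a \<in> {Suc n..7}" using a by auto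
      have "(\<Sum>a'\<in>{a..7}. ip (e a) (g' a') *\<^sub>R g' a') = (\<Sum>a'\<in>{a..7}. ip (e a) (g a') *\<^sub>R g a')"
        by (rule sum.cong[OF refl]) (use a' g'o in auto)
      then show ?thesis using ex[OF a'] by simp
    qed
  qed
  then show ?thesis by blast
qed

lemma GS_exists:
  assumes ip: "is_inner_product ip"
  shows "\<exists>g. GS ip 1 g"
proof -
  have "\<forall>m. m \<le> 7 \<longrightarrow> (\<exists>g. GS ip (8 - m) g)"
  proof (intro allI)
    fix m :: nat show "m \<le> 7 \<longrightarrow> (\<exists>g. GS ip (8 - m) g)"
    proof (induction m)
      case 0
      show ?case by (intro impI exI[of _ "\<lambda>_. 0"]) (simp add: GS_def)
    next
      case (Suc m)
      show ?case
      proof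
        assume m: "Suc m \<le> 7"
        have "Suc (7 - m) = 8 - m" using m by simp
        then obtain g where "GS ip (Suc (7 - m)) g" using Suc m by auto
        moreover have "1 \<le> 7 - m" "7 - m < 8" using m by auto
        ultimately obtain g' where "GS ip (7 - m) g'" using GS_step[OF ip, of "7 - m"] by blast
        then show "\<exists>g. GS ip (8 - Suc m) g" by auto
      qed
    qed
  qed
  then have "\<exists>g. GS ip (8 - 7) g" by blast
  then show ?thesis by simp
qed


lemma ip_minus1: assumes "is_inner_product ip" shows "ip (- x) y = - ip x y"
  using linear_neg[OF ip_lin1[OF assms]] by simp

lemma nbr_antisym: "nbr t x y = - nbr t y x"
  by (simp add: vec7_eq' nbrc algebra_simps)

lemma nbr_self: "nbr t x x = 0"
  by (simp add: vec7_eq' nbrc algebra_simps)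

lemma vexp: "(v::real^7) = (\<Sum>j\<in>{1..7}. v $ of_nat j *\<^sub>R e j)"
  unfolding vec7_eq' nat17 by (simp add: e_comp seven)

lemma ric_sym: "ricci_form_nil ip b B x y = ricci_form_nil ip b B y x"
  by (simp add: ricci_form_nil_def mult.commute)

lemma D_struct_gen:
  assumes der: "is_derivation (nbr t) D" and t01: "t = 0 \<or> t = 1"
    and j: "j \<in> {1..7}" and i: "i \<in> {1..7}"
  shows "i < j \<Longrightarrow> D (e j) $ of_nat i = 0" and "D (e j) $ of_nat j = real j * D (e 1) $ 1"
proof -
  note S = D_struct_comp[OF der t01]
  show "i < j \<Longrightarrow> D (e j) $ of_nat i = 0"
    using i j unfolding nat17 by (auto simp: S seven)
  show "D (e j) $ of_nat j = real j * D (e 1) $ 1"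
    using j unfolding nat17 by (auto simp: S seven)
qed

locale negctx =
  fixes t :: real and ip :: "real^7 \<Rightarrow> real^7 \<Rightarrow> real" and b :: "7 \<Rightarrow> real^7" and c :: real
    and D :: "real^7 \<Rightarrow> real^7" and g :: "nat \<Rightarrow> real^7"
  assumes t01: "t = 0 \<or> t = 1" and ip: "is_inner_product ip" and b: "is_orthonormal_basis ip b"
    and der: "is_derivation (nbr t) D"
    and ric: "\<And>x y. ricci_form_nil ip b (nbr t) x y = ip (c *\<^sub>R x + D x) y"
    and G: "GS ip 1 g"

context negctx
begin

lemma on: "orthonormal_on ip {1..7} g"
  using G unfolding GS_def orthonormal_on_def by auto
lemma co: "a \<in> {1..7} \<Longrightarrow> i \<in> {1..7} \<Longrightarrow> i < a \<Longrightarrow> g a $ of_nat i = 0"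
  using G unfolding GS_def by auto
lemma dg: "a \<in> {1..7} \<Longrightarrow> g a $ of_nat a \<noteq> 0"
  using G unfolding GS_def by auto
lemma ex: "a \<in> {1..7} \<Longrightarrow> e a = (\<Sum>a'\<in>{a..7}. ip (e a) (g a') *\<^sub>R g a')"
  using G unfolding GS_def by auto

lemma card17: "card {1..7::nat} = CARD(7)" by simp

lemma gexp: "v = (\<Sum>l\<in>{1..7}. ip v (g l) *\<^sub>R g l)"
  by (rule onb_expand[OF ip finite_atLeastAtMost card17 on])

lemma G4: assumes l: "l \<in> {1..7}" and m: "m \<in> {1..7}" and lm: "l < m" shows "ip (e m) (g l) = 0"
proof -
  have "ip (e m) (g l) = (\<Sum>a'\<in>{m..7}. ip (e m) (g a') * ip (g a') (g l))"
    by (subst ex[OF m]) (simp add: ip_sum1[OF ip] ip_scale1[OF ip])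
  also have "\<dots> = 0"
    by (rule sum.neutral) (use on l lm in \<open>auto simp: orthonormal_on_def\<close>)
  finally show ?thesis .
qed

lemma Z: assumes v: "\<forall>i\<in>{1..7}. i < k \<longrightarrow> v $ of_nat i = 0" and l: "l \<in> {1..7}" and lk: "l < k"
  shows "ip v (g l) = 0"
proof -
  have "ip v (g l) = (\<Sum>j\<in>{1..7}. v $ of_nat j * ip (e j) (g l))"
    by (subst vexp[of v]) (simp add: ip_sum1[OF ip] ip_scale1[OF ip])
  also have "\<dots> = 0"
  proof (rule sum.neutral, intro ballI)
    fix j :: nat assume j: "j \<in> {1..7}"
    show "v $ of_nat j * ip (e j) (g l) = 0"
    proof (cases "j < k")
      case True then show ?thesis using v j by simp
    next
      case False then show ?thesis using G4[OF l j] lk by simp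
    qed
  qed
  finally show ?thesis .
qed

lemma lin: "linear D" using der unfolding is_derivation_def by simp

lemma DB: assumes v: "\<forall>i\<in>{1..7}. i < k \<longrightarrow> v $ of_nat i = 0" and k: "k \<in> {1..7}"
  shows "\<forall>i\<in>{1..7}. i < k \<longrightarrow> D v $ of_nat i = 0"
    and "D v $ of_nat k = real k * D (e 1) $ 1 * v $ of_nat k"
proof -
  have Dv: "D v $ q = (\<Sum>j\<in>{1..7}. v $ of_nat j * D (e j) $ q)" for q
    by (subst vexp[of v]) (simp add: linear_sum[OF lin] linear_cmul[OF lin])
  show "\<forall>i\<in>{1..7}. i < k \<longrightarrow> D v $ of_nat i = 0"
  proof (intro ballI impI)
    fix i assume i: "i \<in> {1..7}" and ik: "i < k"
    show "D v $ of_nat i = 0" unfolding Dv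
    proof (rule sum.neutral, intro ballI)
      fix j :: nat assume j: "j \<in> {1..7}"
      show "v $ of_nat j * D (e j) $ of_nat i = 0"
      proof (cases "j < k")
        case True then show ?thesis using v j by simp
      next
        case False then show ?thesis using D_struct_gen(1)[OF der t01 j i] ik by simp
      qed
    qed
  qed
  have "D v $ of_nat k = (\<Sum>j\<in>{1..7}. if j = k then real k * D (e 1) $ 1 * v $ of_nat k else 0)"
    unfolding Dv
  proof (rule sum.cong[OF refl])
    fix j :: nat assume j: "j \<in> {1..7}"
    show "v $ of_nat j * D (e j) $ of_nat k = (if j = k then real k * D (e 1) $ 1 * v $ of_nat k else 0)"
    proof (cases "j < k")
      case True then show ?thesis using v j by simp
    next
      case False
      show ?thesis
      proof (cases "j = k")
        case True then show ?thesis using D_struct_gen(2)[OF der t01 j j] by simp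
      next
        case False
        then have "k < j" using \<open>\<not> j < k\<close> by simp
        then show ?thesis using D_struct_gen(1)[OF der t01 j k] False by simp
      qed
    qed
  qed
  also have "\<dots> = real k * D (e 1) $ 1 * v $ of_nat k" using k by simp
  finally show "D v $ of_nat k = real k * D (e 1) $ 1 * v $ of_nat k" .
qed

lemma Dsym: "ip (D x) y = ip (D y) x"
proof -
  have "ip (c *\<^sub>R x + D x) y = ricci_form_nil ip b (nbr t) x y" by (rule ric[symmetric])
  also have "\<dots> = ricci_form_nil ip b (nbr t) y x" by (rule ric_sym)
  also have "\<dots> = ip (c *\<^sub>R y + D y) x" by (rule ric)
  finally have "ip (c *\<^sub>R x + D x) y = ip (c *\<^sub>R y + D y) x" .
  then show ?thesis by (simp add: ip_add1[OF ip] ip_scale1[OF ip] ip_sym[OF ip, of x y])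
qed

lemma gco: "a \<in> {1..7} \<Longrightarrow> \<forall>i\<in>{1..7}. i < a \<longrightarrow> g a $ of_nat i = 0"
  using co by blast

lemma Dg: assumes k: "k \<in> {1..7}" shows "D (g k) = (real k * D (e 1) $ 1) *\<^sub>R g k"
proof -
  note DBk = DB[OF gco[OF k] k]
  have z: "ip (D (g k)) (g l) = 0" if l: "l \<in> {1..7}" "l \<noteq> k" for l
  proof (cases "l < k")
    case True then show ?thesis using Z[OF DBk(1) l(1)] by simp
  next
    case False
    then have kl: "k < l" using l by simp
    have "ip (D (g k)) (g l) = ip (D (g l)) (g k)" by (rule Dsym)
    also have "\<dots> = 0" using Z[OF DB(1)[OF gco[OF l(1)] l(1)] k kl] .
    finally show ?thesis .
  qed
  have "D (g k) = (\<Sum>l\<in>{1..7}. ip (D (g k)) (g l) *\<^sub>R g l)" by (rule gexp)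
  also have "\<dots> = (\<Sum>l\<in>{1..7}. if l = k then ip (D (g k)) (g k) *\<^sub>R g k else 0)"
    by (rule sum.cong[OF refl]) (simp add: z)
  also have "\<dots> = ip (D (g k)) (g k) *\<^sub>R g k" using k by simp
  finally have e1: "D (g k) = ip (D (g k)) (g k) *\<^sub>R g k" .
  have A: "D (g k) $ of_nat k = ip (D (g k)) (g k) * g k $ of_nat k"
    using arg_cong[where f="\<lambda>v. v $ of_nat k", OF e1] by (simp only: vector_scaleR_component real_scaleR_def)
  have "ip (D (g k)) (g k) * g k $ of_nat k = real k * D (e 1) $ 1 * g k $ of_nat k"
    using trans[OF A[symmetric] DBk(2)] .
  then have mu: "ip (D (g k)) (g k) = real k * D (e 1) $ 1"
    using dg[OF k] mult_right_cancel by blast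
  show ?thesis using e1 unfolding mu .
qed

lemma ric_diag: assumes k: "k \<in> {1..7}"
  shows "ricci_form_nil ip b (nbr t) (g k) (g k) = c + real k * D (e 1) $ 1"
proof -
  have "ip (g k) (g k) = 1" using on k by (simp add: orthonormal_on_def)
  then show ?thesis using ric[of "g k" "g k"] Dg[OF k]
    by (simp add: ip_add1[OF ip] ip_scale1[OF ip] algebra_simps)
qed

lemma ric_g: "ricci_form_nil ip b (nbr t) x y =
     - (1/2) * (\<Sum>k\<in>{1..7}. \<Sum>l\<in>{1..7}. ip (nbr t x (g k)) (g l) * ip (nbr t y (g k)) (g l))
     + (1/4) * (\<Sum>k\<in>{1..7}. \<Sum>l\<in>{1..7}. ip (nbr t (g k) (g l)) x * ip (nbr t (g k) (g l)) y)"
  by (rule ricci_onb[OF ip finite_atLeastAtMost card17 on b bilinear_nbr])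

lemma BL1: "linear (\<lambda>u. nbr t u w)" using bilinear_nbr[of t] by (simp add: bilinear_def)
lemma BL2: "linear (nbr t w)" using bilinear_nbr[of t] by (simp add: bilinear_def)

lemma F: assumes a: "D (e 1) $ 1 \<noteq> 0" and i: "i \<in> {1..7}" and j: "j \<in> {1..7}" and l: "l \<in> {1..7}"
    and lij: "l \<noteq> i + j"
  shows "ip (nbr t (g i) (g j)) (g l) = 0"
proof -
  let ?a = "D (e 1) $ 1"
  let ?w = "nbr t (g i) (g j)"
  have "D ?w = nbr t (D (g i)) (g j) + nbr t (g i) (D (g j))"
    using der unfolding is_derivation_def by blast
  also have "\<dots> = (real (i + j) * ?a) *\<^sub>R ?w"
    unfolding Dg[OF i] Dg[OF j] linear_cmul[OF BL1] linear_cmul[OF BL2]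
    by (simp add: algebra_simps)
  finally have Dw: "D ?w = (real (i + j) * ?a) *\<^sub>R ?w" .
  have "real (i + j) * ?a * ip ?w (g l) = ip (D ?w) (g l)" by (simp add: Dw ip_scale1[OF ip])
  also have "\<dots> = ip (D (g l)) ?w" by (rule Dsym)
  also have "\<dots> = real l * ?a * ip ?w (g l)" by (simp add: Dg[OF l] ip_scale1[OF ip] ip_sym[OF ip, of "g l"])
  finally have "(real (i + j) - real l) * ?a * ip ?w (g l) = 0" by (simp add: algebra_simps)
  moreover have "real (i + j) - real l \<noteq> 0" using lij by simp
  ultimately show ?thesis using a by simp
qed

end

context negctx
begin
lemma gc: "g 2 $ 1 = 0" "g 3 $ 1 = 0" "g 3 $ 2 = 0" "g 4 $ 1 = 0" "g 4 $ 2 = 0" "g 4 $ 3 = 0" "g 5 $ 1 = 0" "g 5 $ 2 = 0" "g 5 $ 3 = 0" "g 5 $ 4 = 0" "g 6 $ 1 = 0" "g 6 $ 2 = 0" "g 6 $ 3 = 0" "g 6 $ 4 = 0" "g 6 $ 5 = 0" "g 7 $ 1 = 0" "g 7 $ 2 = 0" "g 7 $ 3 = 0" "g 7 $ 4 = 0" "g 7 $ 5 = 0" "g 7 $ 6 = 0"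
  using co[of 2 1] co[of 3 1] co[of 3 2] co[of 4 1] co[of 4 2] co[of 4 3] co[of 5 1] co[of 5 2] co[of 5 3] co[of 5 4] co[of 6 1] co[of 6 2] co[of 6 3] co[of 6 4] co[of 6 5] co[of 7 1] co[of 7 2] co[of 7 3] co[of 7 4] co[of 7 5] co[of 7 6] by simp_all
lemma gd: "g 1 $ 1 \<noteq> 0" "g 2 $ 2 \<noteq> 0" "g 3 $ 3 \<noteq> 0" "g 4 $ 4 \<noteq> 0" "g 5 $ 5 \<noteq> 0" "g 6 $ 6 \<noteq> 0" "g 7 $ 0 \<noteq> 0"
  using dg[of 1] dg[of 2] dg[of 3] dg[of 4] dg[of 5] dg[of 6] dg[of 7] by (simp_all add: seven)

lemma gc7: "g 7 $ 1 = 0" "g 7 $ 2 = 0" "g 7 $ 3 = 0" "g 7 $ 4 = 0" "g 7 $ 5 = 0" "g 7 $ 6 = 0"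
  using gc by simp_all

lemma nbr_g7: "nbr t (g 7) x = 0"
  by (simp add: vec7_eq' nbrc gc7)

lemma nz12: "\<exists>l\<in>{1..7}. ip (nbr t (g 1) (g 2)) (g l) \<noteq> 0"
proof (rule ccontr)
  assume "\<not> ?thesis"
  then have "nbr t (g 1) (g 2) = 0"
    using gexp[of "nbr t (g 1) (g 2)"] by simp
  then have "nbr t (g 1) (g 2) $ 3 = 0" by simp
  then show False using gd gc by (simp add: nbr3)
qed

lemma alpha0: assumes a: "D (e 1) $ 1 = 0" shows False
proof -
  let ?A = "\<lambda>i j l. ip (nbr t (g i) (g j)) (g l)"
  have rd: "ricci_form_nil ip b (nbr t) (g k) (g k) = c" if "k \<in> {1..7}" for k
    using ric_diag[OF that] a by simp
  have "ricci_form_nil ip b (nbr t) (g 7) (g 7) = (1/4) * (\<Sum>k\<in>{1..7}. \<Sum>l\<in>{1..7}. (?A k l 7)^2)"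
    unfolding ric_g by (simp add: nbr_g7 ip_zero1[OF ip] power2_eq_square)
  also have "\<dots> \<ge> 0" by (simp add: sum_nonneg)
  finally have c0: "c \<ge> 0" using rd[of 7] by simp
  define T1 where "T1 = (\<Sum>i\<in>{1..7}. \<Sum>j\<in>{1..7}. \<Sum>k\<in>{1..7}. (?A i j k)^2)"
  have T2: "(\<Sum>k\<in>{1..7}. \<Sum>i\<in>{1..7}. \<Sum>j\<in>{1..7}. (?A i j k)^2) = T1"
  proof -
    have "(\<Sum>k\<in>{1..7}. \<Sum>i\<in>{1..7}. \<Sum>j\<in>{1..7}. (?A i j k)^2) = (\<Sum>i\<in>{1..7}. \<Sum>k\<in>{1..7}. \<Sum>j\<in>{1..7}. (?A i j k)^2)"
      by (rule sum.swap)
    also have "\<dots> = T1" unfolding T1_def by (rule sum.cong[OF refl], rule sum.swap)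
    finally show ?thesis .
  qed
  have "(\<Sum>k\<in>{1..7}. ricci_form_nil ip b (nbr t) (g k) (g k)) = (\<Sum>k\<in>{1..7::nat}. c)"
    by (rule sum.cong[OF refl]) (rule rd)
  then have "7 * c = (\<Sum>k\<in>{1..7}. ricci_form_nil ip b (nbr t) (g k) (g k))" by simp
  also have "\<dots> = - (1/2) * (\<Sum>k\<in>{1..7}. \<Sum>i\<in>{1..7}. \<Sum>j\<in>{1..7}. (?A k i j)^2)
      + (1/4) * (\<Sum>k\<in>{1..7}. \<Sum>i\<in>{1..7}. \<Sum>j\<in>{1..7}. (?A i j k)^2)"
    unfolding ric_g by (simp add: sum.distrib sum_distrib_left power2_eq_square)
  also have "\<dots> = - (1/4) * T1" unfolding T2 by (simp add: T1_def)
  finally have c7: "7 * c = - (1/4) * T1" .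
  obtain l where l: "l \<in> {1..7}" "?A 1 2 l \<noteq> 0" using nz12 by blast
  have "0 < (?A 1 2 l)^2" using l by simp
  also have "\<dots> \<le> (\<Sum>k\<in>{1..7}. (?A 1 2 k)^2)"
    by (rule member_le_sum) (use l in auto)
  also have "\<dots> \<le> (\<Sum>j\<in>{1..7}. \<Sum>k\<in>{1..7}. (?A 1 j k)^2)"
    by (rule member_le_sum[where f="\<lambda>j. \<Sum>k\<in>{1..7}. (?A 1 j k)^2"]) (auto intro: sum_nonneg)
  also have "\<dots> \<le> T1" unfolding T1_def
    by (rule member_le_sum[where f="\<lambda>i. \<Sum>j\<in>{1..7}. \<Sum>k\<in>{1..7}. (?A i j k)^2"]) (auto intro!: sum_nonneg)
  finally have "T1 > 0" .
  then show False using c7 c0 by simp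
qed


lemma anti_g: "j < i \<Longrightarrow> nbr t (g i) (g j) = - nbr t (g j) (g i)"
  by (rule nbr_antisym)

lemma ucomb_t0:
  assumes a: "D (e 1) $ 1 \<noteq> 0"
  shows "- 9 * ricci_form_nil ip b (nbr t) (g 1) (g 1) + 10 * ricci_form_nil ip b (nbr t) (g 2) (g 2)
    + ricci_form_nil ip b (nbr t) (g 3) (g 3) - 8 * ricci_form_nil ip b (nbr t) (g 4) (g 4)
    + 11 * ricci_form_nil ip b (nbr t) (g 5) (g 5) + 2 * ricci_form_nil ip b (nbr t) (g 6) (g 6)
    - 7 * ricci_form_nil ip b (nbr t) (g 7) (g 7)
    = 14 * (ip (nbr t (g 1) (g 4)) (g 5))^2 - 14 * (ip (nbr t (g 2) (g 5)) (g 7))^2"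
  unfolding ric_g nat17
  by (simp add: F[OF a] anti_g nbr_self ip_minus1[OF ip] ip_zero1[OF ip] power2_eq_square algebra_simps)


lemma ucomb_t1:
  assumes a: "D (e 1) $ 1 \<noteq> 0"
  shows "- 5 * ricci_form_nil ip b (nbr t) (g 1) (g 1) - 10 * ricci_form_nil ip b (nbr t) (g 2) (g 2)
    + 13 * ricci_form_nil ip b (nbr t) (g 3) (g 3) + 8 * ricci_form_nil ip b (nbr t) (g 4) (g 4)
    + 3 * ricci_form_nil ip b (nbr t) (g 5) (g 5) - 2 * ricci_form_nil ip b (nbr t) (g 6) (g 6)
    - 7 * ricci_form_nil ip b (nbr t) (g 7) (g 7)
    = 14 * (ip (nbr t (g 1) (g 2)) (g 3))^2 - 14 * (ip (nbr t (g 3) (g 4)) (g 7))^2"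
  unfolding ric_g nat17
  by (simp add: F[OF a] anti_g nbr_self ip_minus1[OF ip] ip_zero1[OF ip] power2_eq_square algebra_simps)

lemma single_gen:
  assumes a: "D (e 1) $ 1 \<noteq> 0" and i: "i \<in> {1..7}" and j: "j \<in> {1..7}" and ij: "i + j \<in> {1..7}"
    and z: "ip (nbr t (g i) (g j)) (g (i + j)) = 0"
  shows "nbr t (g i) (g j) = 0"
proof -
  have "\<forall>l\<in>{1..7}. ip (nbr t (g i) (g j)) (g l) = 0"
    using F[OF a i j] z by (metis)
  then show ?thesis using gexp[of "nbr t (g i) (g j)"] by simp
qed

lemma alpha_nz: assumes a: "D (e 1) $ 1 \<noteq> 0" shows False
proof -
  have rd: "\<And>k. k \<in> {1..7} \<Longrightarrow> ricci_form_nil ip b (nbr t) (g k) (g k) = c + real k * D (e 1) $ 1"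
    by (rule ric_diag)
  note R = rd[of 1] rd[of 2] rd[of 3] rd[of 4] rd[of 5] rd[of 6] rd[of 7]
  from t01 show False
  proof
    assume t: "t = 0"
    have "0 = 14 * (ip (nbr t (g 1) (g 4)) (g 5))^2 - 14 * (ip (nbr t (g 2) (g 5)) (g 7))^2"
      using ucomb_t0[OF a] R by (simp add: algebra_simps)
    moreover have "nbr t (g 2) (g 5) = 0" using gc t by (simp add: vec7_eq' nbrc)
    ultimately have "ip (nbr t (g 1) (g 4)) (g 5) = 0" by (simp add: ip_zero1[OF ip])
    then have "nbr t (g 1) (g 4) = 0" using single_gen[OF a, of 1 4] by simp
    then have "nbr t (g 1) (g 4) $ 5 = 0" by simp
    then show False using gc gd by (simp add: nbr5)
  next
    assume t: "t = 1"
    have "0 = 14 * (ip (nbr t (g 1) (g 2)) (g 3))^2 - 14 * (ip (nbr t (g 3) (g 4)) (g 7))^2"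
      using ucomb_t1[OF a] R by (simp add: algebra_simps)
    moreover have "nbr t (g 3) (g 4) = 0" using gc t by (simp add: vec7_eq' nbrc)
    ultimately have "ip (nbr t (g 1) (g 2)) (g 3) = 0" by (simp add: ip_zero1[OF ip])
    moreover have "(1::nat) + 2 = 3" by simp
    ultimately have z12: "ip (nbr t (g 1) (g 2)) (g (1 + 2)) = 0" by (simp only:)
    have "nbr t (g 1) (g 2) = 0" by (rule single_gen[OF a _ _ _ z12]) auto
    then have "nbr t (g 1) (g 2) $ 3 = 0" by simp
    then show False using gc gd by (simp add: nbr3)
  qed
qed

lemma contra: False
  using alpha0 alpha_nz by blast

end

theorem mainTheorem17:
  fixes t :: real
  shows "einstein_nilradical (nbr t) \<longleftrightarrow> t \<notin> {0, 1}"
proof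
  assume EN: "einstein_nilradical (nbr t)"
  show "t \<notin> {0, 1}"
  proof
    assume "t \<in> {0, 1}"
    then have t01: "t = 0 \<or> t = 1" by auto
    from EN obtain ip where ip: "is_inner_product ip" and ns: "is_nilsoliton (nbr t) ip"
      unfolding einstein_nilradical_def by blast
    from ns obtain b c D where b: "is_orthonormal_basis ip b" and der: "is_derivation (nbr t) D"
      and ric: "\<forall>x y. ricci_form_nil ip b (nbr t) x y = ip (c *\<^sub>R x + D x) y"
      unfolding is_nilsoliton_def by blast
    obtain g where G: "GS ip 1 g" using GS_exists[OF ip] by blast
    have "negctx t ip b c D g"
      by (unfold_locales) (use t01 ip b der ric G in auto)
    then show False by (rule negctx.contra)
  qed
next
  assume "t \<notin> {0, 1}"
  then show "einstein_nilradical (nbr t)" using pos_dir by auto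
qed

end
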